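(* $\mathrm{Log}_{<1}(\mathbb{Q})\subseteq\mathrm{Log}_{<1}(\mathbb{R})$.
   Context: Modal formulas are built from a countable set of propositional variables using $\bot$, $\to$ and one unary modality $\lozenge$. A frame is a pair $(X,R)$; a valuation assigns subsets of $X$ to variables; $x\models\lozenge\varphi$ iff there is $y$ with $xRy$ and $y\models\varphi$. A formula is valid in a frame if true at every point under every valuation. For a metric space $(X,d)$, $\mathrm{Log}_{<1}(X)$ is the set of modal formulas valid in the frame $(X,R_{<1})$, where $xR_{<1}y$ iff $d(x,y)<1$. $\mathbb{R}$ and $\mathbb{Q}$ carry the metric $d(x,y)=|x-y|$. *)

theory Defs
  imports Complex_Main
begin

datatype fm = Var nat | Bot | Imp fm fm | Dia fm

fun sat :: "'a set \<Rightarrow> ('a \<Rightarrow> 'a \<Rightarrow> bool) \<Rightarrow> (nat \<Rightarrow> 'a set) \<Rightarrow> 'a \<Rightarrow> fm \<Rightarrow> bool" where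
  "sat X R V x (Var p) = (x \<in> V p)"
| "sat X R V x Bot = False"
| "sat X R V x (Imp a b) = (sat X R V x a \<longrightarrow> sat X R V x b)"
| "sat X R V x (Dia a) = (\<exists>y\<in>X. R x y \<and> sat X R V y a)"

definition valid_in_frame :: "'a set \<Rightarrow> ('a \<Rightarrow> 'a \<Rightarrow> bool) \<Rightarrow> fm \<Rightarrow> bool" where
  "valid_in_frame X R \<phi> \<longleftrightarrow>
     (\<forall>V. (\<forall>p. V p \<subseteq> X) \<longrightarrow> (\<forall>x\<in>X. sat X R V x \<phi>))"

definition Log_lt1 :: "'a set \<Rightarrow> ('a \<Rightarrow> 'a \<Rightarrow> real) \<Rightarrow> fm set" where
  "Log_lt1 X d = {\<phi>. valid_in_frame X (\<lambda>x y. d x y < 1) \<phi>}"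

end

theory Submission
  imports Defs "HOL-Library.Countable"
begin

definition good :: "(real \<times> real) set \<Rightarrow> bool" where
  "good S \<longleftrightarrow> (\<forall>a x b y k. (a,x) \<in> S \<longrightarrow> (b,y) \<in> S \<longrightarrow>
      (a < b + of_int k \<longleftrightarrow> x < y + of_int k))"

lemma good_swap: "good (prod.swap ` S) = good S"
  unfolding good_def by auto

lemma good_congr:
  assumes g: "good S" and b: "(b,y) \<in> S"
  shows "good (insert (b + of_int k, y + of_int k) S)"
  unfolding good_def
proof (intro allI impI)
  fix a x c z j
  assume A: "(a,x) \<in> insert (b + of_int k, y + of_int k) S"
     and C: "(c,z) \<in> insert (b + of_int k, y + of_int k) S"
  have G: "\<And>a x c z j. (a,x) \<in> S \<Longrightarrow> (c,z) \<in> S \<Longrightarrow> (a < c + of_int j \<longleftrightarrow> x < z + of_int j)"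
    using g unfolding good_def by blast
  show "a < c + of_int j \<longleftrightarrow> x < z + of_int j"
  proof (cases "(a,x) \<in> S")
    case True
    show ?thesis
    proof (cases "(c,z) \<in> S")
      case True
      then show ?thesis using G \<open>(a,x) \<in> S\<close> by blast
    next
      case False
      then have "c = b + of_int k" "z = y + of_int k" using C by auto
      then show ?thesis using G[OF \<open>(a,x) \<in> S\<close> b, of "k + j"] by (simp add: add.assoc)
    qed
  next
    case False
    then have ax: "a = b + of_int k" "x = y + of_int k" using A by auto
    show ?thesis
    proof (cases "(c,z) \<in> S")
      case True
      have "b + of_int k < c + of_int j \<longleftrightarrow> b < c + of_int (j - k)" by (simp add: algebra_simps)
      moreover have "y + of_int k < z + of_int j \<longleftrightarrow> y < z + of_int (j - k)" by (simp add: algebra_simps)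
      ultimately show ?thesis using G[OF b True, of "j - k"] ax by simp
    next
      case False
      then have "c = b + of_int k" "z = y + of_int k" using C by auto
      then show ?thesis using ax by simp
    qed
  qed
qed

lemma good_gen:
  assumes g: "good S" and fin: "finite S" and ne: "S \<noteq> {}"
    and nc: "\<forall>(b,y)\<in>S. \<forall>k::int. a \<noteq> b + of_int k"
  shows "\<exists>L U. L < U \<and> (\<forall>x. L < x \<and> x < U \<longrightarrow> good (insert (a,x) S))"
proof -
  have G: "\<And>a x c z j. (a,x) \<in> S \<Longrightarrow> (c,z) \<in> S \<Longrightarrow> (a < c + of_int j \<longleftrightarrow> x < z + of_int j)"
    using g unfolding good_def by blast
  define L where "L = Max ((\<lambda>(b,y). y + of_int \<lfloor>a-b\<rfloor>) ` S)"
  define U where "U = Min ((\<lambda>(b,y). y + of_int \<lfloor>a-b\<rfloor> + 1) ` S)"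
  have fl: "\<And>t::real. of_int \<lfloor>t\<rfloor> \<le> t \<and> t < of_int \<lfloor>t\<rfloor> + 1"
    by linarith
  have pair: "y + of_int \<lfloor>a-b\<rfloor> < z + of_int \<lfloor>a-c\<rfloor> + 1" if "(b,y)\<in>S" "(c,z)\<in>S" for b y c z
  proof -
    have "b + of_int \<lfloor>a-b\<rfloor> < a" using fl[of "a-b"] nc that(1)
      by (smt (verit, best) case_prodD)
    moreover have "a < c + of_int \<lfloor>a-c\<rfloor> + 1" using fl[of "a-c"] by linarith
    ultimately have "b < c + of_int (\<lfloor>a-c\<rfloor> + 1 - \<lfloor>a-b\<rfloor>)" by simp
    then have "y < z + of_int (\<lfloor>a-c\<rfloor> + 1 - \<lfloor>a-b\<rfloor>)" using G[OF that] by blast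
    then show ?thesis by simp
  qed
  have LU: "L < U" unfolding L_def U_def
    using fin ne pair by (auto simp add: Max_less_iff Min_gr_iff)
  have Lle: "z + of_int \<lfloor>a-c\<rfloor> \<le> L" if "(c,z)\<in>S" for c z
    unfolding L_def using fin that by (intro Max_ge) force+
  have Uge: "U \<le> z + of_int \<lfloor>a-c\<rfloor> + 1" if "(c,z)\<in>S" for c z
    unfolding U_def using fin that by (intro Min_le) force+
  have new: "good (insert (a,x) S)" if x: "L < x" "x < U" for x
    unfolding good_def
  proof (intro allI impI)
    fix a1 x1 c1 z1 j
    assume A: "(a1,x1) \<in> insert (a,x) S" and C: "(c1,z1) \<in> insert (a,x) S"
    have one: "a < c + of_int j \<longleftrightarrow> x < z + of_int j" if cz: "(c,z)\<in>S" for c z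
    proof -
      have b1: "z + of_int \<lfloor>a-c\<rfloor> < x" "x < z + of_int \<lfloor>a-c\<rfloor> + 1"
        using Lle[OF cz] Uge[OF cz] x by auto
      show ?thesis
      proof (cases "\<lfloor>a-c\<rfloor> < j")
        case True
        then have "\<lfloor>a-c\<rfloor> + 1 \<le> j" by simp
        then have "real_of_int \<lfloor>a-c\<rfloor> + 1 \<le> of_int j" by linarith
        then show ?thesis using b1 fl[of "a-c"] by linarith
      next
        case False
        then have "real_of_int j \<le> of_int \<lfloor>a-c\<rfloor>" by linarith
        then show ?thesis using b1 fl[of "a-c"] by linarith
      qed
    qed
    have two: "c < a + of_int j \<longleftrightarrow> z < x + of_int j" if cz: "(c,z)\<in>S" for c z
    proof -
      have b1: "z + of_int \<lfloor>a-c\<rfloor> < x" "x < z + of_int \<lfloor>a-c\<rfloor> + 1"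
        using Lle[OF cz] Uge[OF cz] x by auto
      have neq: "a \<noteq> c + of_int (- j)" using nc cz by blast
      show ?thesis
      proof (cases "\<lfloor>a-c\<rfloor> < - j")
        case True
        then have "\<lfloor>a-c\<rfloor> + 1 \<le> - j" by simp
        then have "real_of_int \<lfloor>a-c\<rfloor> + 1 \<le> - of_int j" by linarith
        then show ?thesis using b1 fl[of "a-c"] by linarith
      next
        case False
        then have "- real_of_int j \<le> of_int \<lfloor>a-c\<rfloor>" by linarith
        moreover have "a \<noteq> c - of_int j" using neq by simp
        ultimately show ?thesis using b1 fl[of "a-c"] by (smt (verit))
      qed
    qed
    show "a1 < c1 + of_int j \<longleftrightarrow> x1 < z1 + of_int j"
      using A C G one two by auto
  qed
  show ?thesis using LU new by blast
qed


lemma good_forth: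
  assumes g: "good S" and fin: "finite S" and ne: "S \<noteq> {}"
  shows "\<exists>x. good (insert (a,x) S)"
proof (cases "\<exists>(b,y)\<in>S. \<exists>k::int. a = b + of_int k")
  case True
  then obtain b y k where "(b,y)\<in>S" "a = b + of_int k" by blast
  then show ?thesis using good_congr[OF g, of b y k] by blast
next
  case False
  then obtain L U where "L < U" "\<forall>x. L < x \<and> x < U \<longrightarrow> good (insert (a,x) S)"
    using good_gen[OF g fin ne] by blast
  then show ?thesis by (meson dense)
qed

lemma good_back:
  assumes g: "good S" and fin: "finite S" and ne: "S \<noteq> {}" and Q: "fst ` S \<subseteq> \<rat>"
  shows "\<exists>a\<in>\<rat>. good (insert (a,w) S)"
proof -
  have g': "good (prod.swap ` S)" using g good_swap by blast
  have sw: "prod.swap ` insert (w,a) (prod.swap ` S) = insert (a,w) S" for a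
    by (auto simp: image_image)
  have tr: "good (insert (w,a) (prod.swap ` S)) \<Longrightarrow> good (insert (a,w) S)" for a
    using good_swap[of "insert (w,a) (prod.swap ` S)"] sw by simp
  show ?thesis
  proof (cases "\<exists>(b,y)\<in>prod.swap ` S. \<exists>k::int. w = b + of_int k")
    case True
    then obtain b y k where hb: "(b,y)\<in>prod.swap ` S" "w = b + of_int k" by auto
    then have "y \<in> \<rat>" using Q by force
    then have "y + of_int k \<in> \<rat>" by simp
    moreover have "good (insert (w, y + of_int k) (prod.swap ` S))"
      using good_congr[OF g' hb(1), of k] hb(2) by simp
    ultimately show ?thesis using tr by blast
  next
    case False
    then obtain L U where "L < U" "\<forall>x. L < x \<and> x < U \<longrightarrow> good (insert (w,x) (prod.swap ` S))"
      using good_gen[OF g'] fin ne by blast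
    then show ?thesis using Rats_dense_in_real[of L U] tr by blast
  qed
qed

definition props :: "real \<Rightarrow> (real \<times> real) set \<Rightarrow> bool" where
  "props x0 S \<longleftrightarrow> (0,x0) \<in> S \<and> good S \<and> finite S \<and> fst ` S \<subseteq> \<rat>"

lemma good_step:
  assumes P: "props x0 S" and a: "a \<in> \<rat>"
  shows "\<exists>T. S \<subseteq> T \<and> props x0 T \<and> a \<in> fst ` T \<and> w \<in> snd ` T"
proof -
  from P have p: "(0,x0)\<in>S" "good S" "finite S" "fst ` S \<subseteq> \<rat>"
    unfolding props_def by blast+
  have ne: "S \<noteq> {}" using p(1) by blast
  obtain x where x: "good (insert (a,x) S)" using good_forth[OF p(2) p(3) ne] by blast
  let ?S1 = "insert (a,x) S"
  have p1: "fst ` ?S1 \<subseteq> \<rat>" using p(4) a by simp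
  have "\<exists>b\<in>\<rat>. good (insert (b,w) ?S1)"
    by (rule good_back[OF x]) (use p(3) p1 in simp_all)
  then obtain b where b: "b \<in> \<rat>" "good (insert (b,w) ?S1)" by blast
  let ?S2 = "insert (b,w) ?S1"
  have "props x0 ?S2" unfolding props_def using p(1,3) p1 b by simp
  moreover have "S \<subseteq> ?S2" by blast
  moreover have "a \<in> fst ` ?S2" by (rule image_eqI[of _ _ "(a,x)"]) simp_all
  moreover have "w \<in> snd ` ?S2" by (rule image_eqI[of _ _ "(b,w)"]) simp_all
  ultimately show ?thesis by blast
qed

definition stepT :: "real \<Rightarrow> real \<Rightarrow> real \<Rightarrow> (real \<times> real) set \<Rightarrow> (real \<times> real) set" where
  "stepT x0 a w S = (SOME T. S \<subseteq> T \<and> props x0 T \<and> a \<in> fst ` T \<and> w \<in> snd ` T)"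

primrec chn :: "real \<Rightarrow> (nat \<Rightarrow> real) \<Rightarrow> (nat \<Rightarrow> real) \<Rightarrow> nat \<Rightarrow> (real \<times> real) set" where
  "chn x0 A Wn 0 = {(0,x0)}"
| "chn x0 A Wn (Suc n) = stepT x0 (A n) (Wn n) (chn x0 A Wn n)"

lemma stepT_spec:
  assumes P: "props x0 S" and a: "a \<in> \<rat>"
  shows "S \<subseteq> stepT x0 a w S \<and> props x0 (stepT x0 a w S) \<and> a \<in> fst ` stepT x0 a w S
     \<and> w \<in> snd ` stepT x0 a w S"
proof -
  have ex: "\<exists>T. S \<subseteq> T \<and> props x0 T \<and> a \<in> fst ` T \<and> w \<in> snd ` T"
    by (rule good_step[OF P a])
  show ?thesis unfolding stepT_def by (rule someI_ex[OF ex])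
qed

lemma chn_P:
  assumes A: "\<And>n. A n \<in> \<rat>"
  shows "props x0 (chn x0 A Wn n)"
proof (induction n)
  case 0
  show ?case unfolding props_def good_def by auto
next
  case (Suc n)
  show ?case using stepT_spec[OF Suc.IH A[of n], of "Wn n"] by simp
qed

lemma chn_props:
  assumes A: "\<And>n. A n \<in> \<rat>"
  shows "props x0 (chn x0 A Wn n) \<and> chn x0 A Wn n \<subseteq> chn x0 A Wn (Suc n)
     \<and> A n \<in> fst ` chn x0 A Wn (Suc n) \<and> Wn n \<in> snd ` chn x0 A Wn (Suc n)"
  using stepT_spec[OF chn_P[of A x0 Wn n, OF A] A[of n], of "Wn n"] chn_P[of A x0 Wn n, OF A]
  by simp

lemma exists_F:
  fixes x0 :: real and A Wn :: "nat \<Rightarrow> real"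
  assumes A: "\<And>n. A n \<in> \<rat>" and AQ: "\<rat> \<subseteq> range A"
  shows "\<exists>F. good F \<and> fst ` F \<subseteq> \<rat> \<and> \<rat> \<subseteq> fst ` F \<and> range Wn \<subseteq> snd ` F \<and> (0,x0) \<in> F"
proof -
  let ?C = "chn x0 A Wn"
  have H: "props x0 (?C n) \<and> ?C n \<subseteq> ?C (Suc n)
     \<and> A n \<in> fst ` ?C (Suc n) \<and> Wn n \<in> snd ` ?C (Suc n)" for n
    by (rule chn_props[of A, OF A])
  have CP: "props x0 (?C n)" for n using H[of n] by (rule conjunct1)
  have mono1: "?C n \<subseteq> ?C (Suc n)" for n using H[of n] by (elim conjE)
  have fa: "A n \<in> fst ` ?C (Suc n)" for n using H[of n] by (elim conjE)
  have fw: "Wn n \<in> snd ` ?C (Suc n)" for n using H[of n] by (elim conjE)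
  have mono: "?C m \<subseteq> ?C n" if "m \<le> n" for m n
    using lift_Suc_mono_le[of ?C, OF mono1 that] .
  let ?F = "\<Union>n. ?C n"
  have "good ?F" unfolding good_def
  proof (intro allI impI)
    fix a x b y k assume "(a,x) \<in> ?F" "(b,y) \<in> ?F"
    then obtain m n where mn: "(a,x) \<in> ?C m" "(b,y) \<in> ?C n" by blast
    have "?C m \<subseteq> ?C (max m n)" by (rule mono) simp
    moreover have "?C n \<subseteq> ?C (max m n)" by (rule mono) simp
    ultimately have "(a,x) \<in> ?C (max m n)" "(b,y) \<in> ?C (max m n)" using mn by auto
    moreover have "good (?C (max m n))" using CP[of "max m n"] unfolding props_def by simp
    ultimately show "a < b + of_int k \<longleftrightarrow> x < y + of_int k"
      unfolding good_def by blast
  qed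
  moreover have "fst ` ?F \<subseteq> \<rat>"
  proof
    fix q assume "q \<in> fst ` ?F"
    then obtain n where "q \<in> fst ` ?C n" by auto
    then show "q \<in> \<rat>" using CP[of n] unfolding props_def by auto
  qed
  moreover have "\<rat> \<subseteq> fst ` ?F"
  proof
    fix q :: real assume "q \<in> \<rat>"
    then obtain n where qn: "q = A n" using AQ by blast
    obtain p where p: "p \<in> ?C (Suc n)" "q = fst p" using fa[of n] qn by blast
    have "p \<in> ?F" using p(1) by blast
    then show "q \<in> fst ` ?F" using p(2) by (rule image_eqI[rotated])
  qed
  moreover have "range Wn \<subseteq> snd ` ?F"
  proof
    fix w assume "w \<in> range Wn"
    then obtain n where qn: "w = Wn n" by blast
    obtain p where p: "p \<in> ?C (Suc n)" "w = snd p" using fw[of n] qn by blast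
    have "p \<in> ?F" using p(1) by blast
    then show "w \<in> snd ` ?F" using p(2) by (rule image_eqI[rotated])
  qed
  moreover have "(0,x0) \<in> ?F" using CP[of 0] unfolding props_def by blast
  ultimately show ?thesis by blast
qed

instance fm :: countable by countable_datatype

theorem theorem4p12:
  shows "Log_lt1 (\<rat> :: real set) (\<lambda>x y. \<bar>x - y\<bar>) \<subseteq> Log_lt1 (UNIV :: real set) (\<lambda>x y. \<bar>x - y\<bar>)"
proof
  fix \<phi> assume "\<phi> \<in> Log_lt1 (\<rat> :: real set) (\<lambda>x y. \<bar>x - y\<bar>)"
  then have vQ: "valid_in_frame (\<rat> :: real set) (\<lambda>x y. \<bar>x - y\<bar> < 1) \<phi>"
    by (simp add: Log_lt1_def)
  have "\<forall>V. (\<forall>p. V p \<subseteq> (UNIV :: real set)) \<longrightarrow> (\<forall>x\<in>UNIV. sat UNIV (\<lambda>x y. \<bar>x - y\<bar> < 1) V x \<phi>)"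
  proof (intro allI impI ballI)
    fix V :: "nat \<Rightarrow> real set" and x0 :: real
    show "sat UNIV (\<lambda>x y. \<bar>x - y\<bar> < 1) V x0 \<phi>"
    proof (rule ccontr)
      assume nsat: "\<not> sat UNIV (\<lambda>x y. \<bar>x - y\<bar> < 1) V x0 \<phi>"
      let ?R = "\<lambda>x y::real. \<bar>x - y\<bar> < 1"
      define wit where "wit = (\<lambda>(\<psi>::fm, p::rat, r::rat).
          SOME y. of_rat p < y \<and> y < of_rat r \<and> sat UNIV ?R V y \<psi>)"
      define e where "e = (from_nat :: nat \<Rightarrow> rat \<times> (fm \<times> rat \<times> rat))"
      define A where "A = (\<lambda>n. of_rat (fst (e n)) :: real)"
      define Wn where "Wn = (\<lambda>n. wit (snd (e n)))"
      have A1: "\<And>n. A n \<in> \<rat>" by (simp add: A_def)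
      have AQ: "\<rat> \<subseteq> range A"
      proof
        fix q :: real assume "q \<in> \<rat>"
        then obtain r where r: "q = of_rat r" by (auto elim: Rats_cases)
        have "A (to_nat (r, Bot, r, r)) = q" by (simp add: A_def e_def r)
        then show "q \<in> range A" by (metis rangeI)
      qed
      obtain F where F: "good F" "fst ` F \<subseteq> \<rat>" "\<rat> \<subseteq> fst ` F" "range Wn \<subseteq> snd ` F"
        "(0,x0) \<in> F"
        using exists_F[OF A1 AQ, of Wn x0] by blast
      have GF: "\<And>a x b y k. (a,x) \<in> F \<Longrightarrow> (b,y) \<in> F \<Longrightarrow> (a < b + of_int k \<longleftrightarrow> x < y + of_int k)"
        using F(1) unfolding good_def by blast
      have fnF: "x = y" if "(a,x) \<in> F" "(a,y) \<in> F" for a x y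
        using GF[OF that(1) that(2), of 0] GF[OF that(2) that(1), of 0] by auto
      define g where "g a = (THE x. (a,x) \<in> F)" for a
      have gF: "g a = x" if "(a,x) \<in> F" for a x
        unfolding g_def
      proof (rule the_equality)
        show "(a,x) \<in> F" by (rule that)
        fix x' assume "(a,x') \<in> F"
        then show "x' = x" by (rule fnF[OF _ that])
      qed
      have ginF: "(a, g a) \<in> F" if "a \<in> \<rat>" for a
      proof -
        have "a \<in> fst ` F" using F(3) that by blast
        then obtain p where p: "p \<in> F" "a = fst p" by (rule imageE)
        have ap: "(a, snd p) \<in> F" using p by simp
        then show ?thesis using gF[OF ap] by simp
      qed
      have rel: "\<bar>a - b\<bar> < 1 \<longleftrightarrow> \<bar>x - y\<bar> < 1" if "(a,x) \<in> F" "(b,y) \<in> F" for a b x y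
        using GF[OF that(1) that(2), of 1] GF[OF that(2) that(1), of 1] by auto
      have dens: "\<exists>w\<in>range Wn. u < w \<and> w < v \<and> sat UNIV ?R V w \<psi>"
        if sy: "sat UNIV ?R V y \<psi>" and uy: "u < y" and yv: "y < v" for y u v \<psi>
      proof -
        obtain p where p: "p \<in> \<rat>" "u < p" "p < y" using Rats_dense_in_real[OF uy] by blast
        obtain r where r: "r \<in> \<rat>" "y < r" "r < v" using Rats_dense_in_real[OF yv] by blast
        obtain p' where p': "p = of_rat p'" using p(1) by (auto elim: Rats_cases)
        obtain r' where r': "r = of_rat r'" using r(1) by (auto elim: Rats_cases)
        let ?w = "wit (\<psi>, p', r')"
        have ex: "\<exists>y. of_rat p' < y \<and> y < of_rat r' \<and> sat UNIV ?R V y \<psi>"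
          using sy p r p' r' by blast
        have w: "of_rat p' < ?w \<and> ?w < of_rat r' \<and> sat UNIV ?R V ?w \<psi>"
          unfolding wit_def using someI_ex[OF ex] by simp
        have "Wn (to_nat ((0::rat), (\<psi>, p', r'))) = ?w" by (simp add: Wn_def e_def)
        then have "?w \<in> range Wn" by (metis rangeI)
        then show ?thesis using w p r p' r' by force
      qed
      define V' where "V' p = {a\<in>\<rat>. g a \<in> V p}" for p
      have key: "sat \<rat> ?R V' a \<psi> \<longleftrightarrow> sat UNIV ?R V (g a) \<psi>" if "a \<in> \<rat>" for a \<psi>
        using that
      proof (induction \<psi> arbitrary: a)
        case (Var p)
        then show ?case by (simp add: V'_def)
      next
        case Bot
        then show ?case by simp
      next
        case (Imp \<psi>1 \<psi>2)
        then show ?case by simp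
      next
        case (Dia \<psi>)
        show ?case
        proof
          assume "sat \<rat> ?R V' a (Dia \<psi>)"
          then obtain b where b: "b \<in> \<rat>" "\<bar>a - b\<bar> < 1" "sat \<rat> ?R V' b \<psi>" by auto
          have "sat UNIV ?R V (g b) \<psi>" using Dia.IH[OF b(1)] b(3) by simp
          moreover have "\<bar>g a - g b\<bar> < 1" using rel[OF ginF[OF Dia.prems] ginF[OF b(1)]] b(2) by simp
          ultimately show "sat UNIV ?R V (g a) (Dia \<psi>)" by auto
        next
          assume "sat UNIV ?R V (g a) (Dia \<psi>)"
          then obtain y where y: "\<bar>g a - y\<bar> < 1" "sat UNIV ?R V y \<psi>" by auto
          have "g a - 1 < y" "y < g a + 1" using y(1) by linarith+
          then obtain w where w: "w \<in> range Wn" "g a - 1 < w" "w < g a + 1" "sat UNIV ?R V w \<psi>"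
            using dens[OF y(2)] by blast
          obtain p where p: "p \<in> F" "w = snd p" using w(1) F(4) by blast
          then have bw: "(fst p, w) \<in> F" by simp
          have bQ: "fst p \<in> \<rat>" using F(2) p(1) by blast
          have gb: "g (fst p) = w" using gF[OF bw] .
          have "\<bar>g a - w\<bar> < 1" using w(2,3) by linarith
          then have "\<bar>a - fst p\<bar> < 1" using rel[OF ginF[OF Dia.prems] bw] by simp
          moreover have "sat \<rat> ?R V' (fst p) \<psi>" using Dia.IH[OF bQ] gb w(4) by simp
          ultimately show "sat \<rat> ?R V' a (Dia \<psi>)" using bQ by auto
        qed
      qed
      have g0: "g 0 = x0" using gF[OF F(5)] .
      have "\<not> sat \<rat> ?R V' 0 \<phi>" using key[of 0 \<phi>] g0 nsat by simp
      moreover have "sat \<rat> ?R V' 0 \<phi>"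
        using vQ unfolding valid_in_frame_def V'_def by auto
      ultimately show False by blast
    qed
  qed
  then show "\<phi> \<in> Log_lt1 (UNIV :: real set) (\<lambda>x y. \<bar>x - y\<bar>)"
    by (simp add: Log_lt1_def valid_in_frame_def)
qed

end
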